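(* For every $b>0$ and $0\le\delta<1$ there exists a univariate polynomial $s_{b,\delta}$ of degree $\lceil\sqrt{2\theta\log(4/\delta)}\rceil$, where $\theta=\lceil\max\{\tfrac12be^2,\log(2/\delta)\}\rceil$, such that \[ |\exp(-2t)-s_{b,\delta}^2(t)|\le2\delta+\delta^2\le3\delta\qquad\forall t\in[0,b]. \]
   Context: $\log$ is the natural logarithm and $e$ is Euler's number. *)

theory Defs
  imports Complex_Main "HOL-Computational_Algebra.Polynomial"
begin

end

theory Submission
  imports Defs "HOL-Probability.Hoeffding"
begin

lemma cosh_bound:
  fixes s :: real assumes "s \<ge> 0"
  shows "exp s + exp (-s) \<le> 2 * exp (s^2/2)"
proof -
  have H: "ln (1 + (1/2) * (exp (2 * s) - 1)) - s \<le> s^2/2"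
    using Hoeffdings_lemma_aux[of "2 * s" "1/2"] assms by (simp add: power2_eq_square)
  define c where "c = (exp s + exp (-s))/2"
  have c0: "c > 0" by (simp add: c_def add_pos_pos)
  have "1 + (1/2) * (exp (2 * s) - 1) = exp s * c"
    by (simp add: c_def field_simps exp_add[symmetric] exp_minus)
  hence "ln (1 + (1/2) * (exp (2 * s) - 1)) = s + ln c"
    using c0 by (simp add: ln_mult)
  with H have "ln c \<le> s^2/2" by simp
  hence "c \<le> exp (s^2/2)"
    using c0 by (metis exp_le_cancel_iff exp_ln)
  hence "(exp s + exp (-s))/2 \<le> exp (s^2/2)" by (simp add: c_def)
  thus ?thesis by simp
qed

lemma binom_exp:
  fixes u :: real
  shows "(\<Sum>j\<le>k. real (k choose j) * exp (u * (2 * real j - real k))) = (exp u + exp (-u))^k"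
proof -
  have "(exp u + exp (-u))^k = (\<Sum>j\<le>k. real (k choose j) * exp u ^ j * exp (-u) ^ (k - j))"
    by (simp add: binomial_ring)
  also have "\<dots> = (\<Sum>j\<le>k. real (k choose j) * exp (u * (2 * real j - real k)))"
  proof (rule sum.cong)
    fix j assume "j \<in> {..k}"
    hence "real (k - j) = real k - real j" by auto
    hence "exp u ^ j * exp (-u) ^ (k - j) = exp (u * (2 * real j - real k))"
      by (simp add: exp_of_nat_mult[symmetric] exp_add[symmetric] algebra_simps)
    thus "real (k choose j) * exp u ^ j * exp (-u) ^ (k - j) = real (k choose j) * exp (u * (2 * real j - real k))"
      by simp
  qed simp
  finally show ?thesis by simp
qed

lemma tail_bound:
  fixes k d :: nat assumes "k > 0"
  shows "(\<Sum>j\<in>{j. j \<le> k \<and> \<bar>2 * real j - real k\<bar> > real d}. real (k choose j))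
          \<le> 2 * 2^k * exp (- ((real d)^2) / (2 * real k))"
proof -
  define s where "s = real d / real k"
  have s0: "s \<ge> 0" by (simp add: s_def)
  let ?A = "{j. j \<le> k \<and> \<bar>2 * real j - real k\<bar> > real d}"
  have "(\<Sum>j\<in>?A. real (k choose j)) \<le> (\<Sum>j\<in>?A. real (k choose j) *
      (exp (s * (2 * real j - real k) - s * d) + exp (-s * (2 * real j - real k) - s * d)))"
  proof (rule sum_mono)
    fix j assume "j \<in> ?A"
    hence A: "\<bar>2 * real j - real k\<bar> > real d" by simp
    have "s * (2 * real j - real k) - s * d \<ge> 0 \<or> -s * (2 * real j - real k) - s * d \<ge> 0"
    proof (cases "2 * real j - real k \<ge> 0")
      case True
      hence "real d \<le> 2 * real j - real k" using A by simp
      hence "s * d \<le> s * (2 * real j - real k)" using s0 by (rule mult_left_mono)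
      thus ?thesis by simp
    next
      case False
      hence "real d \<le> -(2 * real j - real k)" using A by simp
      hence "s * d \<le> s * (-(2 * real j - real k))" using s0 by (rule mult_left_mono)
      thus ?thesis by (simp add: algebra_simps)
    qed
    hence "1 \<le> exp (s * (2 * real j - real k) - s * d) + exp (-s * (2 * real j - real k) - s * d)"
      by (smt (verit) exp_ge_zero one_le_exp_iff)
    thus "real (k choose j) \<le> real (k choose j) *
      (exp (s * (2 * real j - real k) - s * d) + exp (-s * (2 * real j - real k) - s * d))"
      by (simp add: mult_le_cancel_left1)
  qed
  also have "\<dots> \<le> (\<Sum>j\<le>k. real (k choose j) *
      (exp (s * (2 * real j - real k) - s * d) + exp (-s * (2 * real j - real k) - s * d)))"
    by (rule sum_mono2) auto
  also have "\<dots> = exp (- s * d) * ((\<Sum>j\<le>k. real (k choose j) * exp (s * (2 * real j - real k)))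
       + (\<Sum>j\<le>k. real (k choose j) * exp ((-s) * (2 * real j - real k))))"
  proof -
    have e: "exp (x - y) = exp (-y) * exp x" for x y :: real by (simp add: exp_diff exp_minus field_simps)
    show ?thesis unfolding e by (simp add: sum_distrib_left sum.distrib algebra_simps)
  qed
  also have "\<dots> = exp (- s * d) * (2 * (exp s + exp (-s))^k)"
    using binom_exp[where u=s and k=k] binom_exp[where u="-s" and k=k] by (simp add: add.commute)
  also have "\<dots> \<le> exp (- s * d) * (2 * (2 * exp (s^2/2))^k)"
    using cosh_bound[OF s0] by (intro mult_left_mono power_mono) auto
  also have "\<dots> = 2 * 2^k * exp (- s * d + real k * (s^2/2))"
    by (simp add: power_mult_distrib exp_of_nat_mult[symmetric] exp_add[symmetric])
  also have "- s * d + real k * (s^2/2) = - ((real d)^2) / (2 * real k)"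
    using assms by (simp add: s_def field_simps power2_eq_square)
  finally show ?thesis .
qed


fun cheb :: "nat \<Rightarrow> real poly" where
  "cheb 0 = 1"
| "cheb (Suc 0) = [:0, 1:]"
| "cheb (Suc (Suc n)) = [:0, 2:] * cheb (Suc n) - cheb n"

lemma cheb_degree: "degree (cheb n) \<le> n"
proof (induction n rule: cheb.induct)
  case (3 n)
  have "degree ([:0, 2:] * cheb (Suc n)) \<le> Suc (Suc n)"
    using degree_mult_le[of "[:0, 2:]" "cheb (Suc n)"] 3 by simp
  moreover have "degree (cheb n) \<le> Suc (Suc n)" using 3 by simp
  ultimately show ?case by (simp add: degree_diff_le)
qed auto

lemma cheb_cos: "poly (cheb n) (cos (x::real)) = cos (real n * x)"
proof (induction n rule: cheb.induct)
  case (3 n)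
  have "cos (real (Suc (Suc n)) * x) = cos ((real n + 1) * x + x)"
    by (simp add: algebra_simps)
  also have "\<dots> = 2 * cos x * cos ((real n + 1) * x) - cos ((real n + 1) * x - x)"
    by (simp add: cos_add cos_diff)
  also have "(real n + 1) * x - x = real n * x" by (simp add: algebra_simps)
  finally show ?case using 3 by (simp add: algebra_simps)
qed auto

lemma power_cos:
  fixes x :: real shows
  "cos x ^ k = (\<Sum>j\<le>k. real (k choose j) * cos ((2 * real j - real k) * x)) / 2^k"
proof -
  have c: "complex_of_real (2 * cos x) = cis x + cis (-x)"
    by (simp add: complex_eq_iff)
  have "complex_of_real ((2 * cos x) ^ k) = (cis x + cis (-x)) ^ k"
    by (simp only: of_real_power c)
  also have "\<dots> = (\<Sum>j\<le>k. of_nat (k choose j) * cis x ^ j * cis (-x) ^ (k - j))"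
    by (simp add: binomial_ring)
  also have "\<dots> = (\<Sum>j\<le>k. of_nat (k choose j) * cis ((2 * real j - real k) * x))"
  proof (rule sum.cong)
    fix j assume "j \<in> {..k}"
    hence "real (k - j) = real k - real j" by auto
    hence e: "real j * x + real (k - j) * (-x) = (2 * real j - real k) * x"
      by (simp add: algebra_simps)
    have "cis x ^ j * cis (-x) ^ (k - j) = cis (real j * x + real (k - j) * (-x))"
    proof -
      have 1: "cis x ^ j = cis (real j * x)" by (rule Complex.DeMoivre)
      have 2: "cis (-x) ^ (k-j) = cis (real (k-j) * (-x))" by (rule Complex.DeMoivre)
      show ?thesis unfolding 1 2 by (rule cis_mult)
    qed
    hence "cis x ^ j * cis (-x) ^ (k - j) = cis ((2 * real j - real k) * x)"
      by (simp only: e)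
    thus "of_nat (k choose j) * cis x ^ j * cis (-x) ^ (k - j) = of_nat (k choose j) * cis ((2 * real j - real k) * x)"
      by (simp add: mult.assoc)
  qed simp
  finally have "(2 * cos x) ^ k = Re (\<Sum>j\<le>k. of_nat (k choose j) * cis ((2 * real j - real k) * x))"
    by (metis Re_complex_of_real)
  also have "\<dots> = (\<Sum>j\<le>k. real (k choose j) * cos ((2 * real j - real k) * x))"
    by (simp add: Re_sum)
  finally show ?thesis by (simp add: power_mult_distrib field_simps)
qed


definition pk :: "nat \<Rightarrow> nat \<Rightarrow> real poly" where
  "pk d k = (\<Sum>j\<in>{j. j \<le> k \<and> \<bar>2 * real j - real k\<bar> \<le> real d}.
       smult (real (k choose j) / 2^k) (cheb (nat \<bar>2 * int j - int k\<bar>)))"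

lemma pk_degree: "degree (pk d k) \<le> d"
  unfolding pk_def
proof (rule degree_sum_le)
  fix j assume "j \<in> {j. j \<le> k \<and> \<bar>2 * real j - real k\<bar> \<le> real d}"
  hence "\<bar>2 * real j - real k\<bar> \<le> real d" by simp
  hence "nat \<bar>2 * int j - int k\<bar> \<le> d" by linarith
  thus "degree (smult (real (k choose j) / 2^k) (cheb (nat \<bar>2 * int j - int k\<bar>))) \<le> d"
    using cheb_degree[of "nat \<bar>2 * int j - int k\<bar>"] degree_smult_le le_trans by blast
qed auto

lemma pk_err0:
  fixes x :: real assumes "\<bar>x\<bar> \<le> 1"
  shows "\<bar>x^k - poly (pk d k) x\<bar> \<le>
     (\<Sum>j\<in>{j. j \<le> k \<and> \<bar>2 * real j - real k\<bar> > real d}. real (k choose j)) / 2^k"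
proof -
  define a where "a = arccos x"
  have xa: "x = cos a" using assms by (simp add: a_def cos_arccos_abs)
  let ?S = "{j. j \<le> k \<and> \<bar>2 * real j - real k\<bar> \<le> real d}"
  let ?A = "{j. j \<le> k \<and> \<bar>2 * real j - real k\<bar> > real d}"
  let ?f = "\<lambda>j. real (k choose j) * cos ((2 * real j - real k) * a) / 2^k"
  have fin: "finite ?S" "finite ?A" by auto
  have un: "{..k} = ?S \<union> ?A" by auto
  have "poly (pk d k) x = (\<Sum>j\<in>?S. ?f j)"
    unfolding pk_def poly_sum
  proof (rule sum.cong)
    fix j assume "j \<in> ?S"
    have a0: "a \<ge> 0" unfolding a_def using assms by (intro arccos_lbound) auto
    have "real (nat \<bar>2 * int j - int k\<bar>) = \<bar>2 * real j - real k\<bar>" by linarith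
    hence "real (nat \<bar>2 * int j - int k\<bar>) * a = \<bar>(2 * real j - real k) * a\<bar>"
      using a0 by (simp add: abs_mult)
    hence "poly (cheb (nat \<bar>2 * int j - int k\<bar>)) x = cos \<bar>(2 * real j - real k) * a\<bar>"
      unfolding xa cheb_cos by simp
    hence "poly (cheb (nat \<bar>2 * int j - int k\<bar>)) x = cos ((2 * real j - real k) * a)"
      by (simp only: cos_abs_real)
    thus "poly (smult (real (k choose j) / 2 ^ k) (cheb (nat \<bar>2 * int j - int k\<bar>))) x = ?f j"
      by simp
  qed simp
  moreover have "x^k = (\<Sum>j\<in>?S. ?f j) + (\<Sum>j\<in>?A. ?f j)"
  proof -
    have "x^k = (\<Sum>j\<le>k. ?f j)" unfolding xa power_cos by (simp add: sum_divide_distrib)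
    also have "\<dots> = (\<Sum>j\<in>?S. ?f j) + (\<Sum>j\<in>?A. ?f j)"
      unfolding un by (rule sum.union_disjoint) auto
    finally show ?thesis .
  qed
  ultimately have "\<bar>x^k - poly (pk d k) x\<bar> = \<bar>\<Sum>j\<in>?A. ?f j\<bar>" by simp
  also have "\<dots> \<le> (\<Sum>j\<in>?A. \<bar>?f j\<bar>)" by (rule sum_abs)
  also have "\<dots> \<le> (\<Sum>j\<in>?A. real (k choose j) / 2^k)"
  proof (intro sum_mono)
    fix j
    have "\<bar>?f j\<bar> = real (k choose j) * \<bar>cos ((2 * real j - real k) * a)\<bar> / 2^k"
      by (simp add: abs_mult)
    also have "\<dots> \<le> real (k choose j) * 1 / 2^k"
      by (intro divide_right_mono mult_left_mono) auto
    finally show "\<bar>?f j\<bar> \<le> real (k choose j) / 2^k" by simp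
  qed
  finally show ?thesis by (simp add: sum_divide_distrib)
qed

lemma pk_err:
  fixes x :: real assumes "\<bar>x\<bar> \<le> 1" "k > 0"
  shows "\<bar>x^k - poly (pk d k) x\<bar> \<le> 2 * exp (- ((real d)^2) / (2 * real k))"
proof -
  have "\<bar>x^k - poly (pk d k) x\<bar> \<le>
     (\<Sum>j\<in>{j. j \<le> k \<and> \<bar>2 * real j - real k\<bar> > real d}. real (k choose j)) / 2^k"
    by (rule pk_err0[OF assms(1)])
  also have "\<dots> \<le> (2 * 2^k * exp (- ((real d)^2) / (2 * real k))) / 2^k"
    by (intro divide_right_mono tail_bound assms) auto
  finally show ?thesis by simp
qed


lemma pow_fact_le_exp:
  fixes y :: real assumes "y \<ge> 0"
  shows "y^n / fact n \<le> exp y"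
proof -
  obtain t where t: "\<bar>t\<bar> \<le> \<bar>y\<bar>" "exp y = (\<Sum>m<Suc n. y ^ m / fact m) + exp t / fact (Suc n) * y ^ Suc n"
    using Maclaurin_exp_le[of y "Suc n"] by blast
  have "y^n / fact n \<le> (\<Sum>m<Suc n. y ^ m / fact m)"
    using assms by (intro member_le_sum) auto
  also have "\<dots> \<le> exp y" using t assms by simp
  finally show ?thesis .
qed

lemma exp_partial_le:
  fixes y :: real assumes "y \<ge> 0"
  shows "(\<Sum>m<n. y ^ m / fact m) \<le> exp y"
proof -
  obtain t where t: "\<bar>t\<bar> \<le> \<bar>y\<bar>" "exp y = (\<Sum>m<n. y ^ m / fact m) + exp t / fact n * y ^ n"
    using Maclaurin_exp_le[of y n] by blast
  thus ?thesis using assms by simp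
qed

lemma taylor_tail:
  fixes y :: real and n :: nat assumes "\<bar>y\<bar> \<le> c"
  shows "\<bar>exp y - (\<Sum>m<n. y ^ m / fact m)\<bar> \<le> exp c * c^n / fact n"
proof -
  obtain t where t: "\<bar>t\<bar> \<le> \<bar>y\<bar>" "exp y = (\<Sum>m<n. y ^ m / fact m) + exp t / fact n * y ^ n"
    using Maclaurin_exp_le[of y n] by blast
  have "\<bar>exp y - (\<Sum>m<n. y ^ m / fact m)\<bar> = exp t / fact n * \<bar>y\<bar> ^ n"
    using t by (simp add: abs_mult power_abs)
  also have "\<dots> \<le> exp c / fact n * c ^ n"
    using t assms by (intro mult_mono divide_right_mono power_mono) auto
  finally show ?thesis by simp
qed

lemma lagrange_small:
  fixes l :: real and K :: nat
  assumes "l > 0" "l * (exp 1)^2 \<le> real K"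
  shows "l ^ Suc K / fact (Suc K) \<le> exp (- real (Suc K))"
proof -
  define n where "n = Suc K"
  have n0: "real n > 0" by (simp add: n_def)
  have "l ^ n / fact n = (l / n)^n * (real n ^ n / fact n)"
    using n0 by (simp add: power_divide)
  also have "\<dots> \<le> (l / n)^n * exp (real n)"
    using assms(1) n0 by (intro mult_left_mono pow_fact_le_exp) auto
  also have "\<dots> = (l * exp 1 / n)^n"
    by (simp add: power_mult_distrib power_divide exp_of_nat_mult[symmetric])
  also have "\<dots> \<le> (exp (-1))^n"
  proof (intro power_mono)
    have "l * exp 1 * exp 1 \<le> real n" using assms(2) by (simp add: n_def power2_eq_square)
    hence "l * exp 1 \<le> real n * exp (-1)" by (simp add: exp_minus field_simps)
    thus "l * exp 1 / n \<le> exp (-1)" using n0 by (simp add: field_simps)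
    show "0 \<le> l * exp 1 / n" using assms(1) n0 by simp
  qed
  also have "\<dots> = exp (- real n)" by (simp add: exp_of_nat_mult[symmetric])
  finally show ?thesis by (simp add: n_def)
qed


lemma approx:
  fixes b \<delta> :: real and K d :: nat
  assumes b0: "b > 0" and d0: "0 < \<delta>" and d1: "\<delta> < 1"
    and K1: "b * (exp 1)^2 / 2 \<le> real K" and K2: "ln (2 / \<delta>) \<le> real K"
    and dK: "2 * real K * ln (4 / \<delta>) \<le> (real d)^2"
  shows "\<exists>s0. degree s0 \<le> d \<and> (\<forall>t\<in>{0..b}. \<bar>exp (-t) - poly s0 t\<bar> \<le> \<delta>/2 + exp (-1) * (\<delta>/2))"
proof -
  define l where "l = b / 2"
  have l0: "l > 0" using b0 by (simp add: l_def)
  define c where "c = (\<lambda>k. exp (-l) * l^k / fact k)"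
  define P where "P = (\<Sum>k\<le>K. smult (c k) (pk d k))"
  define s0 where "s0 = pcompose P [:1, -1/l:]"
  have degP: "degree P \<le> d" unfolding P_def
    by (rule degree_sum_le) (auto simp: pk_degree)
  have "degree s0 = degree P * degree [:1, -1/l:]" unfolding s0_def by (rule degree_pcompose)
  also have "degree [:1, -1/l:] = 1" using l0 by simp
  finally have degs0: "degree s0 \<le> d" using degP by simp
  have Kpos: "real K > 0"
  proof -
    have "b * (exp 1)^2 / 2 > 0" using b0 by simp
    thus ?thesis using K1 by linarith
  qed
  have lK: "l * (exp 1)^2 \<le> real K" using K1 by (simp add: l_def)
  have eK: "exp (- real K) \<le> \<delta>/2"
  proof -
    have "exp (- real K) \<le> exp (- ln (2/\<delta>))" using K2 by simp
    also have "\<dots> = \<delta>/2" using d0 by (simp add: exp_minus)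
    finally show ?thesis .
  qed
  have pkb: "\<bar>x^k - poly (pk d k) x\<bar> \<le> \<delta>/2" if x: "\<bar>x\<bar> \<le> 1" and k: "k \<le> K" for x :: real and k
  proof (cases "k = 0")
    case True
    have E: "{j. j \<le> k \<and> \<bar>2 * real j - real k\<bar> > real d} = {}" using True by auto
    have "\<bar>x^k - poly (pk d k) x\<bar> \<le> 0" using pk_err0[OF x, of k d] unfolding E by simp
    thus ?thesis using d0 by simp
  next
    case False
    hence kp: "real k > 0" by simp
    have "\<bar>x^k - poly (pk d k) x\<bar> \<le> 2 * exp (- ((real d)^2) / (2 * real k))"
      using pk_err[OF x] False by simp
    also have "\<dots> \<le> 2 * exp (- ln (4/\<delta>))"
    proof -
      have L: "ln (4/\<delta>) \<ge> 0" using d0 d1 by simp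
      have "2 * real k * ln (4/\<delta>) \<le> 2 * real K * ln (4/\<delta>)"
        using k L by (intro mult_right_mono) auto
      hence "2 * real k * ln (4/\<delta>) \<le> (real d)^2" using dK by linarith
      hence "ln (4/\<delta>) \<le> (real d)^2 / (2 * real k)" using kp by (simp add: field_simps)
      thus ?thesis by simp
    qed
    also have "\<dots> = \<delta>/2" using d0 by (simp add: exp_minus)
    finally show ?thesis .
  qed
  have "\<bar>exp (-t) - poly s0 t\<bar> \<le> \<delta>/2 + exp (-1) * (\<delta>/2)" if t: "t \<in> {0..b}" for t
  proof -
    define x where "x = 1 - t / l"
    have x1: "\<bar>x\<bar> \<le> 1" using t l0 by (auto simp: x_def l_def field_simps abs_le_iff)
    have ps0: "poly s0 t = poly P x" unfolding s0_def x_def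
      by (simp add: poly_pcompose algebra_simps)
    have et: "exp (-t) = exp (-l) * exp (l * x)"
      using l0 by (simp add: x_def field_simps flip: exp_add)
    have pP: "poly P x = (\<Sum>k\<le>K. c k * poly (pk d k) x)" unfolding P_def by (simp add: poly_sum)
    have T: "(\<Sum>m<Suc K. (l * x) ^ m / fact m) = (\<Sum>k\<le>K. l^k / fact k * x^k)"
      by (simp add: lessThan_Suc_atMost power_mult_distrib)
    have "exp (-t) - poly s0 t = exp (-l) * (exp (l * x) - (\<Sum>m<Suc K. (l * x) ^ m / fact m))
        + (\<Sum>k\<le>K. c k * (x^k - poly (pk d k) x))"
    proof -
      have S1: "(\<Sum>k\<le>K. c k * (x^k - poly (pk d k) x)) = (\<Sum>k\<le>K. c k * x^k) - (\<Sum>k\<le>K. c k * poly (pk d k) x)"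
        by (simp add: right_diff_distrib sum_subtractf)
      have S2: "(\<Sum>k\<le>K. c k * x^k) = exp (-l) * (\<Sum>k\<le>K. l^k / fact k * x^k)"
        unfolding sum_distrib_left c_def by (intro sum.cong) auto
      show ?thesis unfolding ps0 et pP T S1 S2 by (simp add: right_diff_distrib)
    qed
    hence "\<bar>exp (-t) - poly s0 t\<bar> \<le> exp (-l) * \<bar>exp (l * x) - (\<Sum>m<Suc K. (l * x) ^ m / fact m)\<bar>
        + (\<Sum>k\<le>K. c k * \<bar>x^k - poly (pk d k) x\<bar>)"
    proof -
      assume e: "exp (-t) - poly s0 t = exp (-l) * (exp (l * x) - (\<Sum>m<Suc K. (l * x) ^ m / fact m))
        + (\<Sum>k\<le>K. c k * (x^k - poly (pk d k) x))"
      have "\<bar>\<Sum>k\<le>K. c k * (x^k - poly (pk d k) x)\<bar> \<le> (\<Sum>k\<le>K. \<bar>c k * (x^k - poly (pk d k) x)\<bar>)"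
        by (rule sum_abs)
      also have "\<dots> = (\<Sum>k\<le>K. c k * \<bar>x^k - poly (pk d k) x\<bar>)"
        using l0 by (intro sum.cong) (auto simp: abs_mult c_def)
      moreover have "\<bar>exp (-l) * (exp (l * x) - (\<Sum>m<Suc K. (l * x) ^ m / fact m))
        + (\<Sum>k\<le>K. c k * (x^k - poly (pk d k) x))\<bar> \<le> \<bar>exp (-l) * (exp (l * x) - (\<Sum>m<Suc K. (l * x) ^ m / fact m))\<bar>
        + \<bar>\<Sum>k\<le>K. c k * (x^k - poly (pk d k) x)\<bar>" by (rule abs_triangle_ineq)
      moreover have "\<bar>exp (-l) * (exp (l * x) - (\<Sum>m<Suc K. (l * x) ^ m / fact m))\<bar> =
         exp (-l) * \<bar>exp (l * x) - (\<Sum>m<Suc K. (l * x) ^ m / fact m)\<bar>" by (simp add: abs_mult)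
      ultimately show ?thesis unfolding e by linarith
    qed
    also have "\<dots> \<le> exp (-l) * (exp l * l ^ Suc K / fact (Suc K)) + (\<Sum>k\<le>K. c k * (\<delta>/2))"
    proof (rule add_mono)
      have "\<bar>exp (l * x) - (\<Sum>m<Suc K. (l * x) ^ m / fact m)\<bar> \<le> exp l * l ^ Suc K / fact (Suc K)"
        using x1 l0 by (intro taylor_tail) (simp add: abs_mult mult_left_le)
      thus "exp (-l) * \<bar>exp (l * x) - (\<Sum>m<Suc K. (l * x) ^ m / fact m)\<bar> \<le> exp (-l) * (exp l * l ^ Suc K / fact (Suc K))"
        by (intro mult_left_mono) auto
      show "(\<Sum>k\<le>K. c k * \<bar>x^k - poly (pk d k) x\<bar>) \<le> (\<Sum>k\<le>K. c k * (\<delta>/2))"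
      proof (rule sum_mono)
        fix k assume "k \<in> {..K}"
        thus "c k * \<bar>x^k - poly (pk d k) x\<bar> \<le> c k * (\<delta>/2)"
          using pkb[OF x1] l0 by (intro mult_left_mono) (auto simp: c_def)
      qed
    qed
    also have "exp (-l) * (exp l * l ^ Suc K / fact (Suc K)) = l ^ Suc K / fact (Suc K)"
      by (simp add: exp_minus field_simps)
    also have "\<dots> \<le> exp (- real (Suc K))" by (rule lagrange_small[OF l0 lK])
    also have "\<dots> = exp (-1) * exp (- real K)" by (simp flip: exp_add)
    also have "\<dots> \<le> exp (-1) * (\<delta>/2)" using eK by simp
    also have "(\<Sum>k\<le>K. c k * (\<delta>/2)) = exp (-l) * (\<Sum>m<Suc K. l ^ m / fact m) * (\<delta>/2)"
      by (simp add: c_def sum_distrib_left sum_distrib_right lessThan_Suc_atMost)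
    also have "\<dots> \<le> exp (-l) * exp l * (\<delta>/2)"
      using d0 l0 by (intro mult_right_mono mult_left_mono exp_partial_le) auto
    also have "\<dots> = \<delta>/2" by (simp flip: exp_add)
    finally show ?thesis by simp
  qed
  thus ?thesis using degs0 by blast
qed


theorem corollary5:
  fixes b \<delta> :: real
  assumes "b > 0" and "0 < \<delta>" and "\<delta> < 1"
  shows "let \<theta> = real_of_int \<lceil>max (b * (exp 1)^2 / 2) (ln (2 / \<delta>))\<rceil>
         in \<exists>s :: real poly.
              degree s = nat \<lceil>sqrt (2 * \<theta> * ln (4 / \<delta>))\<rceil> \<and>
              (\<forall>t\<in>{0..b}. \<bar>exp (-2 * t) - (poly s t)^2\<bar> \<le> 2 * \<delta> + \<delta>^2) \<and>
              2 * \<delta> + \<delta>^2 \<le> 3 * \<delta>"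
proof -
  note b0 = assms(1) and d0 = assms(2) and d1 = assms(3)
  define c0 where "c0 = \<lceil>max (b * (exp 1)^2 / 2) (ln (2 / \<delta>))\<rceil>"
  define K where "K = nat c0"
  have mpos: "max (b * (exp 1)^2 / 2) (ln (2 / \<delta>)) > 0" using b0 by (simp add: less_max_iff_disj)
  hence c0pos: "c0 > 0" unfolding c0_def by simp
  have rK: "real K = real_of_int c0" using c0pos by (simp add: K_def)
  have K1: "b * (exp 1)^2 / 2 \<le> real K" unfolding rK c0_def
    by (meson le_of_int_ceiling max.cobounded1 order_trans)
  have K2: "ln (2 / \<delta>) \<le> real K" unfolding rK c0_def
    by (meson le_of_int_ceiling max.cobounded2 order_trans)
  define D where "D = nat \<lceil>sqrt (2 * real K * ln (4 / \<delta>))\<rceil>"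
  have L4: "ln (4 / \<delta>) > 0" using d0 d1 by simp
  have arg0: "2 * real K * ln (4 / \<delta>) \<ge> 0" using L4 by (simp add: zero_le_mult_iff)
  have "real D \<ge> sqrt (2 * real K * ln (4 / \<delta>))" unfolding D_def by linarith
  hence "(real D)^2 \<ge> (sqrt (2 * real K * ln (4 / \<delta>)))^2"
    using arg0 by (intro power_mono) auto
  hence dK: "2 * real K * ln (4 / \<delta>) \<le> (real D)^2" using arg0 by simp
  obtain s0 where s0: "degree s0 \<le> D"
    "\<And>t. t \<in> {0..b} \<Longrightarrow> \<bar>exp (-t) - poly s0 t\<bar> \<le> \<delta>/2 + exp (-1) * (\<delta>/2)"
    using approx[OF b0 d0 d1 K1 K2 dK] by blast
  define m where "m = \<delta> - (\<delta>/2 + exp (-1) * (\<delta>/2))"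
  have "exp (-1::real) < 1" by simp
  hence m0: "m > 0" using d0 by (simp add: m_def)
  define e0 where "e0 = m / (1 + b^D)"
  have bD: "b^D \<ge> 0" using b0 by simp
  have e00: "e0 > 0" using m0 bD by (simp add: e0_def)
  define e where "e = (if coeff s0 D + e0 = 0 then e0/2 else e0)"
  have e_pos: "e > 0" "e \<le> e0" using e00 by (auto simp: e_def)
  have ce: "coeff s0 D + e \<noteq> 0" using e00 by (auto simp: e_def)
  define s where "s = s0 + monom e D"
  have degs: "degree s = D"
  proof (rule antisym)
    show "degree s \<le> D" unfolding s_def
      using s0(1) degree_monom_le[of e D] by (intro degree_add_le) auto
    show "D \<le> degree s" using ce by (intro le_degree) (simp add: s_def)
  qed
  have err: "\<bar>exp (-t) - poly s t\<bar> \<le> \<delta>" if t: "t \<in> {0..b}" for t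
  proof -
    have "t^D \<le> b^D" using t by (intro power_mono) auto
    hence "e * t^D \<le> e0 * b^D" using e_pos t by (intro mult_mono) auto
    also have "e0 * b^D \<le> m" unfolding e0_def using m0 bD by (simp add: field_simps)
    finally have em: "e * t^D \<le> m" .
    have et0: "e * t^D \<ge> 0" using e_pos t by simp
    have "poly s t = poly s0 t + e * t^D" by (simp add: s_def poly_monom)
    hence "\<bar>exp (-t) - poly s t\<bar> \<le> \<bar>exp (-t) - poly s0 t\<bar> + e * t^D" using et0 by simp
    thus ?thesis using s0(2)[OF t] em by (simp add: m_def)
  qed
  have main: "\<bar>exp (-2 * t) - (poly s t)^2\<bar> \<le> 2 * \<delta> + \<delta>^2" if t: "t \<in> {0..b}" for t
  proof -
    define r where "r = poly s t - exp (-t)"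
    have r: "\<bar>r\<bar> \<le> \<delta>" using err[OF t] by (simp add: r_def abs_minus_commute)
    have E: "exp (-2 * t) = exp (-t) * exp (-t)" by (simp flip: exp_add)
    have "exp (-2 * t) - (poly s t)^2 = - (2 * exp (-t) * r + r * r)"
      unfolding E r_def by (simp add: power2_eq_square algebra_simps)
    hence "\<bar>exp (-2 * t) - (poly s t)^2\<bar> = \<bar>2 * exp (-t) * r + r * r\<bar>" by (simp only: abs_minus_cancel)
    also have "\<dots> \<le> \<bar>2 * exp (-t) * r\<bar> + \<bar>r * r\<bar>" by (rule abs_triangle_ineq)
    also have "\<dots> = 2 * exp (-t) * \<bar>r\<bar> + \<bar>r\<bar> * \<bar>r\<bar>" by (simp add: abs_mult)
    also have "\<dots> \<le> 2 * 1 * \<delta> + \<delta> * \<delta>"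
      using t r by (intro add_mono mult_mono) auto
    finally show ?thesis by (simp add: power2_eq_square)
  qed
  have fin: "2 * \<delta> + \<delta>^2 \<le> 3 * \<delta>" using d0 d1 by (simp add: power2_eq_square)
  show ?thesis unfolding Let_def c0_def[symmetric] rK[symmetric] D_def[symmetric]
    using degs main fin by blast
qed

end
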